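(* Let $n\ge 2$, and let $A=(a_{ij})$ be a real symmetric $n\times n$ matrix with eigenvalues $\mu_1\ge \mu_2\ge \cdots\ge \mu_n$. Assume that $0\le a_{ij}\le 1$ for all $i\ne j$, and $a_{ii}\ge 0$ for all $1\le i\le n$. Then \[ \mu_{n-1}+\mu_n\ge -\frac{2n}{3}. \] In particular, $\mu_{n-1}\ge -\frac{n}{3}$. *)

theory Defs
  imports "Jordan_Normal_Form.Char_Poly"
begin

end

theory Submission
  imports Defs "Jordan_Normal_Form.Schur_Decomposition"
begin

lemma poly_ineq:
  fixes G H :: real
  assumes r: "r = sqrt (G^2 + H^2)" and rpos: "r > 0"
  shows "36 * r^3 * max 0 (-G) \<le> 12 * r^4 + 7 * r^2 * (G^2 - H^2) - 18 * G * r^3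
           - (G^4 - 6 * G^2 * H^2 + H^4)"
proof -
  have r2: "r^2 = G^2 + H^2" using r by simp
  have H2: "H^2 = r^2 - G^2" using r2 by simp
  have H4: "H^4 = (r^2 - G^2)^2" by (metis H2 power_mult numeral_Bit0 power2_eq_square mult_2 power_add)
  have Gle: "\<bar>G\<bar> \<le> r" using r real_sqrt_abs[of G] real_sqrt_le_mono[of "G^2" "G^2+H^2"] by simp
  have eq: "12 * r^4 + 7 * r^2 * (G^2 - H^2) - 18 * G * r^3 - (G^4 - 6 * G^2 * H^2 + H^4)
         = 2 * ((2*G - r)^2 * (r - G) * (G + 2*r))"
    unfolding H2 H4 by (simp add: algebra_simps power2_eq_square power3_eq_cube power4_eq_xxxx)
  show ?thesis
  proof (cases "G \<ge> 0")
    case True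
    have "0 \<le> (2*G - r)^2 * (r - G) * (G + 2*r)"
      using Gle True rpos by (intro mult_nonneg_nonneg) auto
    then show ?thesis using True by (simp add: eq)
  next
    case False
    have eq2: "2 * ((2*G - r)^2 * (r - G) * (G + 2*r)) - 36 * r^3 * (-G)
             = 2 * ((2*G + r)^2 * (r + G) * (2*r - G))"
      by (simp add: algebra_simps power2_eq_square power3_eq_cube)
    have "0 \<le> (2*G + r)^2 * (r + G) * (2*r - G)"
      using Gle False rpos by (intro mult_nonneg_nonneg) auto
    moreover have "max 0 (-G) = -G" using False by simp
    ultimately show ?thesis using eq eq2 by linarith
  qed
qed

definition pp :: "complex \<Rightarrow> complex" where "pp u = u^2 / of_real (cmod u)"
definition qq :: "complex \<Rightarrow> complex" where "qq u = u^4 / of_real (cmod u ^ 3)"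

lemma pp_mult: "pp u * cnj (pp v) = (u * cnj v)^2 / of_real (cmod (u * cnj v))"
  unfolding pp_def by (simp add: norm_mult power_mult_distrib field_simps)

lemma qq_mult: "qq u * cnj (qq v) = (u * cnj v)^4 / of_real (cmod (u * cnj v) ^ 3)"
  unfolding qq_def by (simp add: norm_mult power_mult_distrib field_simps)

lemma Re_pow2: "Re (w^2) = Re w ^ 2 - Im w ^ 2"
  by (simp add: power2_eq_square)

lemma Re_pow4: "Re (w^4) = Re w ^ 4 - 6 * Re w ^ 2 * Im w ^ 2 + Im w ^ 4"
proof -
  have "w^4 = (w^2)^2" by (simp flip: power_mult)
  then show ?thesis by (simp add: power2_eq_square power4_eq_xxxx algebra_simps)
qed

lemma pointwise:
  "max 0 (- Re (u * cnj v)) \<le> cmod u * cmod v / 3 + 7/36 * Re (pp u * cnj (pp v))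
     - Re (u * cnj v) / 2 - 1/36 * Re (qq u * cnj (qq v))"
proof (cases "u = 0 \<or> v = 0")
  case True
  then show ?thesis by (auto simp: pp_def qq_def)
next
  case False
  define w where "w = u * cnj v"
  define G where "G = Re w"
  define H where "H = Im w"
  define r where "r = cmod w"
  have rpos: "r > 0" using False by (simp add: r_def w_def)
  have rdef: "r = sqrt (G^2 + H^2)" by (simp add: r_def G_def H_def cmod_def)
  have ruv: "cmod u * cmod v = r" by (simp add: r_def w_def norm_mult)
  have e1: "Re (pp u * cnj (pp v)) = (G^2 - H^2) / r"
    unfolding pp_mult w_def[symmetric] r_def[symmetric]
    by (simp add: Re_divide_of_real Re_pow2 G_def H_def)
  have e2: "Re (qq u * cnj (qq v)) = (G^4 - 6 * G^2 * H^2 + H^4) / r^3"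
    unfolding qq_mult w_def[symmetric] r_def[symmetric]
    by (metis Re_divide_of_real Re_pow4 G_def H_def of_real_power)
  have key: "36 * r^3 * max 0 (-G) \<le> 12 * r^4 + 7 * r^2 * (G^2 - H^2) - 18 * G * r^3
           - (G^4 - 6 * G^2 * H^2 + H^4)"
    by (rule poly_ineq[OF rdef rpos])
  have "max 0 (-G) \<le> r / 3 + 7/36 * ((G^2 - H^2) / r) - G / 2 - 1/36 * ((G^4 - 6 * G^2 * H^2 + H^4) / r^3)"
  proof -
    have "r / 3 + 7/36 * ((G^2 - H^2) / r) - G / 2 - 1/36 * ((G^4 - 6 * G^2 * H^2 + H^4) / r^3)
        = (12 * r^4 + 7 * r^2 * (G^2 - H^2) - 18 * G * r^3 - (G^4 - 6 * G^2 * H^2 + H^4)) / (36 * r^3)"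
      using rpos by (simp add: field_simps power2_eq_square power3_eq_cube power4_eq_xxxx)
    moreover have "max 0 (-G) \<le> (12 * r^4 + 7 * r^2 * (G^2 - H^2) - 18 * G * r^3 - (G^4 - 6 * G^2 * H^2 + H^4)) / (36 * r^3)"
    proof (rule pos_le_divide_eq[THEN iffD2])
      show "0 < 36 * r^3" using rpos by simp
      show "max 0 (-G) * (36 * r^3) \<le> 12 * r^4 + 7 * r^2 * (G^2 - H^2) - 18 * G * r^3 - (G^4 - 6 * G^2 * H^2 + H^4)"
        using key by (simp only: mult.commute)
    qed
    ultimately show ?thesis by simp
  qed
  then show ?thesis using e1 e2 ruv by (simp add: G_def w_def)
qed

lemma cs_sum:
  fixes t :: "nat \<Rightarrow> real"
  shows "(\<Sum>i<n. t i)^2 \<le> real n * (\<Sum>i<n. (t i)^2)"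
proof (cases "n = 0")
  case True then show ?thesis by simp
next
  case False
  define m where "m = (\<Sum>i<n. t i) / real n"
  have "0 \<le> (\<Sum>i<n. (t i - m)^2)" by (intro sum_nonneg) auto
  also have "\<dots> = (\<Sum>i<n. (t i)^2) - 2 * m * (\<Sum>i<n. t i) + real n * m^2"
    by (simp add: power2_diff sum_subtractf sum.distrib sum_distrib_left mult_ac)
  also have "\<dots> = (\<Sum>i<n. (t i)^2) - (\<Sum>i<n. t i)^2 / real n"
    using False by (simp add: m_def field_simps power2_eq_square)
  finally have "(\<Sum>i<n. t i)^2 / real n \<le> (\<Sum>i<n. (t i)^2)" by simp
  then show ?thesis using False by (simp add: divide_le_eq mult.commute)
qed

lemma sum_cnj:
  "(\<Sum>i\<in>A. \<Sum>j\<in>A. Re (f i * cnj (f j))) = (cmod (\<Sum>i\<in>A. f i))^2"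
proof -
  have "(\<Sum>i\<in>A. \<Sum>j\<in>A. Re (f i * cnj (f j))) = (\<Sum>i\<in>A. Re (f i * cnj (\<Sum>j\<in>A. f j)))"
    by (simp only: cnj_sum sum_distrib_left Re_sum)
  also have "\<dots> = Re ((\<Sum>i\<in>A. f i) * cnj (\<Sum>j\<in>A. f j))"
    by (simp only: sum_distrib_right Re_sum)
  also have "\<dots> = (cmod (\<Sum>i\<in>A. f i))^2"
    by (metis Re_complex_of_real complex_norm_square)
  finally show ?thesis .
qed

lemma sum_prod_sq:
  fixes f :: "nat \<Rightarrow> real"
  shows "(\<Sum>i\<in>A. \<Sum>j\<in>A. f i * f j) = (\<Sum>i\<in>A. f i)^2"
  by (simp add: power2_eq_square sum_product)

lemma t_sq_bound:
  fixes z c :: complex and \<alpha> :: real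
  shows "(\<alpha> * cmod z + Re (cnj c * pp z))^2 \<le> \<alpha>^2 * (cmod z)^2 + 2 * \<alpha> * Re (cnj c * z^2) + (cmod c)^2 * (cmod z)^2"
proof (cases "z = 0")
  case True then show ?thesis by (simp add: pp_def)
next
  case False
  define m where "m = cmod z"
  define R where "R = Re (cnj c * z^2)"
  have mpos: "m > 0" using False by (simp add: m_def)
  have e0: "cnj c * pp z = (cnj c * z^2) / of_real m" by (simp add: pp_def m_def)
  have e: "Re (cnj c * pp z) = R / m"
    unfolding e0 R_def by (simp only: Re_divide_of_real)
  have "\<bar>R\<bar> \<le> cmod c * m^2"
    using abs_Re_le_cmod[of "cnj c * z^2"] by (simp add: R_def m_def norm_mult norm_power)
  then have "\<bar>R\<bar>^2 \<le> (cmod c * m^2)^2" by (intro power_mono) auto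
  then have R2: "R^2 \<le> (cmod c)^2 * m^4" by (simp add: power_mult_distrib flip: power_mult)
  have eq: "(\<alpha> * m + R / m)^2 = \<alpha>^2 * m^2 + 2 * \<alpha> * R + R^2 / m^2"
    using mpos by (simp add: power2_eq_square field_simps)
  have le: "R^2 / m^2 \<le> (cmod c)^2 * m^2"
  proof -
    have "R^2 / m^2 \<le> (cmod c)^2 * m^4 / m^2" using R2 mpos by (simp add: divide_right_mono)
    also have "\<dots> = (cmod c)^2 * m^2" using mpos by (simp add: power2_eq_square power4_eq_xxxx)
    finally show ?thesis .
  qed
  have "(\<alpha> * m + R / m)^2 \<le> \<alpha>^2 * m^2 + 2 * \<alpha> * R + (cmod c)^2 * m^2"
    unfolding eq using le by linarith
  then show ?thesis unfolding e m_def R_def .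
qed

lemma sum4:
  fixes f1 f2 f3 f4 :: "nat \<Rightarrow> nat \<Rightarrow> real"
  shows "(\<Sum>i\<in>S. \<Sum>j\<in>S. f1 i j / 3 + 7/36 * f2 i j - f3 i j / 2 - 1/36 * f4 i j)
    = (\<Sum>i\<in>S. \<Sum>j\<in>S. f1 i j) / 3 + 7/36 * (\<Sum>i\<in>S. \<Sum>j\<in>S. f2 i j)
      - (\<Sum>i\<in>S. \<Sum>j\<in>S. f3 i j) / 2 - 1/36 * (\<Sum>i\<in>S. \<Sum>j\<in>S. f4 i j)"
  by (simp add: sum.distrib sum_subtractf sum_divide_distrib sum_distrib_left)

lemma sum3:
  fixes f g h :: "nat \<Rightarrow> real"
  shows "(\<Sum>i\<in>S. a * f i + b * g i + d * h i) = a * (\<Sum>i\<in>S. f i) + b * (\<Sum>i\<in>S. g i) + d * (\<Sum>i\<in>S. h i)"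
  by (simp add: sum.distrib sum_distrib_left)

lemma core:
  fixes x y :: "nat \<Rightarrow> real" and a :: "nat \<Rightarrow> nat \<Rightarrow> real"
  assumes xx: "(\<Sum>i<n. (x i)^2) = 1" and yy: "(\<Sum>i<n. (y i)^2) = 1"
    and xy: "(\<Sum>i<n. x i * y i) = 0"
    and off: "\<forall>i<n. \<forall>j<n. i \<noteq> j \<longrightarrow> 0 \<le> a i j \<and> a i j \<le> 1"
    and dg: "\<forall>i<n. 0 \<le> a i i"
  shows "- (2 * real n / 3) \<le> (\<Sum>i<n. \<Sum>j<n. a i j * (x i * x j + y i * y j))"
proof -
  define z where "z i = Complex (x i) (y i)" for i
  have G: "Re (z i * cnj (z j)) = x i * x j + y i * y j" for i j by (simp add: z_def)
  have nz: "(cmod (z i))^2 = (x i)^2 + (y i)^2" for i by (simp add: z_def cmod_def)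
  have sumnz: "(\<Sum>i<n. (cmod (z i))^2) = 2" using xx yy by (simp add: nz sum.distrib)
  have sumz2: "(\<Sum>i<n. (z i)^2) = 0"
  proof -
    have "Re (\<Sum>i<n. (z i)^2) = (\<Sum>i<n. (x i)^2) - (\<Sum>i<n. (y i)^2)"
      by (simp add: Re_sum z_def power2_eq_square sum_subtractf)
    moreover have "Im (\<Sum>i<n. (z i)^2) = 2 * (\<Sum>i<n. x i * y i)"
      by (simp add: Im_sum z_def power2_eq_square sum_distrib_left)
    ultimately show ?thesis using xx yy xy by (simp add: complex_eq_iff)
  qed
  define X where "X = (\<Sum>i<n. cmod (z i))"
  define P where "P = (\<Sum>i<n. pp (z i))"
  define Z where "Z = (\<Sum>i<n. z i)"
  define QQ where "QQ = (\<Sum>i<n. qq (z i))"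
  define Q0 where "Q0 = X^2 / 3 + 7/36 * (cmod P)^2"
  have step1: "(\<Sum>i<n. \<Sum>j<n. - max 0 (- Re (z i * cnj (z j)))) \<le> (\<Sum>i<n. \<Sum>j<n. a i j * (x i * x j + y i * y j))"
  proof (intro sum_mono)
    fix i j assume i: "i \<in> {..<n}" and j: "j \<in> {..<n}"
    define g where "g = x i * x j + y i * y j"
    have Gg: "Re (z i * cnj (z j)) = g" using G by (simp add: g_def)
    have key: "- max 0 (- g) \<le> a i j * g"
    proof (cases "0 \<le> g")
      case True
      have "0 \<le> a i j" using dg off i j by (cases "i = j") auto
      then have "0 \<le> a i j * g" using True by (rule mult_nonneg_nonneg)
      moreover have "max 0 (- g) = 0" using True by simp
      ultimately show ?thesis by linarith
    next
      case False
      then have ij: "i \<noteq> j" unfolding g_def by (auto simp: add_nonneg_nonneg)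
      then have a: "0 \<le> a i j" "a i j \<le> 1" using off i j by auto
      have "0 \<le> (a i j - 1) * g" using a False by (intro mult_nonpos_nonpos) auto
      then have "g \<le> a i j * g" by (simp add: left_diff_distrib)
      moreover have "max 0 (- g) = - g" using False by simp
      ultimately show ?thesis by linarith
    qed
    then show "- max 0 (- Re (z i * cnj (z j))) \<le> a i j * (x i * x j + y i * y j)"
      unfolding Gg g_def .
  qed
  have step2: "(\<Sum>i<n. \<Sum>j<n. max 0 (- Re (z i * cnj (z j)))) \<le> Q0"
  proof -
    have "(\<Sum>i<n. \<Sum>j<n. max 0 (- Re (z i * cnj (z j)))) \<le>
          (\<Sum>i<n. \<Sum>j<n. cmod (z i) * cmod (z j) / 3 + 7/36 * Re (pp (z i) * cnj (pp (z j)))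
             - Re (z i * cnj (z j)) / 2 - 1/36 * Re (qq (z i) * cnj (qq (z j))))"
      by (intro sum_mono pointwise)
    also have "\<dots> = (\<Sum>i<n. \<Sum>j<n. cmod (z i) * cmod (z j)) / 3
         + 7/36 * (\<Sum>i<n. \<Sum>j<n. Re (pp (z i) * cnj (pp (z j))))
         - (\<Sum>i<n. \<Sum>j<n. Re (z i * cnj (z j))) / 2
         - 1/36 * (\<Sum>i<n. \<Sum>j<n. Re (qq (z i) * cnj (qq (z j))))"
      by (rule sum4)
    also have "\<dots> = X^2 / 3 + 7/36 * (cmod P)^2 - (cmod Z)^2 / 2 - 1/36 * (cmod QQ)^2"
      unfolding sum_cnj sum_prod_sq X_def P_def Z_def QQ_def ..
    also have "\<dots> \<le> Q0"
    proof -
      have "0 \<le> (cmod Z)^2" "0 \<le> (cmod QQ)^2" by simp_all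
      then show ?thesis unfolding Q0_def by linarith
    qed
    finally show ?thesis .
  qed
  have step3: "Q0 \<le> 2 * real n / 3"
  proof -
    define \<alpha> where "\<alpha> = X / 3"
    define c where "c = complex_of_real (7/36) * P"
    define t where "t i = \<alpha> * cmod (z i) + Re (cnj c * pp (z i))" for i
    have st: "(\<Sum>i<n. t i) = Q0"
    proof -
      have "(\<Sum>i<n. t i) = (\<Sum>i<n. \<alpha> * cmod (z i)) + (\<Sum>i<n. Re (cnj c * pp (z i)))"
        unfolding t_def by (rule sum.distrib)
      also have "(\<Sum>i<n. \<alpha> * cmod (z i)) = \<alpha> * X"
        unfolding X_def by (rule sum_distrib_left[symmetric])
      also have "(\<Sum>i<n. Re (cnj c * pp (z i))) = Re (cnj c * P)"
        unfolding P_def by (simp only: sum_distrib_left Re_sum)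
      also have "Re (cnj c * P) = 7/36 * (cmod P)^2"
      proof -
        have "cnj c * P = complex_of_real (7/36) * (P * cnj P)" by (simp add: c_def mult_ac)
        also have "\<dots> = complex_of_real (7/36 * (cmod P)^2)"
          by (simp only: complex_norm_square[symmetric] of_real_mult)
        finally have "Re (cnj c * P) = Re (complex_of_real (7/36 * (cmod P)^2))" by (rule arg_cong)
        then show ?thesis by (simp only: Re_complex_of_real)
      qed
      finally show ?thesis by (simp add: Q0_def \<alpha>_def power2_eq_square)
    qed
    have "(\<Sum>i<n. (t i)^2) \<le> (\<Sum>i<n. \<alpha>^2 * (cmod (z i))^2 + 2 * \<alpha> * Re (cnj c * (z i)^2) + (cmod c)^2 * (cmod (z i))^2)"
      unfolding t_def by (intro sum_mono t_sq_bound)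
    also have "\<dots> = \<alpha>^2 * (\<Sum>i<n. (cmod (z i))^2) + 2 * \<alpha> * (\<Sum>i<n. Re (cnj c * (z i)^2)) + (cmod c)^2 * (\<Sum>i<n. (cmod (z i))^2)"
      by (rule sum3)
    also have "\<dots> = 2 * \<alpha>^2 + 2 * (cmod c)^2"
    proof -
      have "(\<Sum>i<n. Re (cnj c * (z i)^2)) = Re (cnj c * (\<Sum>i<n. (z i)^2))"
        by (simp only: sum_distrib_left Re_sum)
      then have "(\<Sum>i<n. Re (cnj c * (z i)^2)) = 0" using sumz2 by simp
      then show ?thesis using sumnz by simp
    qed
    finally have st2: "(\<Sum>i<n. (t i)^2) \<le> 2 * \<alpha>^2 + 2 * (cmod c)^2" .
    have cm: "cmod c = 7/36 * cmod P" by (simp add: c_def norm_mult)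
    have "Q0^2 \<le> real n * (\<Sum>i<n. (t i)^2)"
      using cs_sum[of t n] st by simp
    also have "\<dots> \<le> real n * (2 * \<alpha>^2 + 2 * (cmod c)^2)"
      using st2 by (intro mult_left_mono) auto
    also have "\<dots> \<le> (2 * real n / 3) * Q0"
    proof -
      have "2 * \<alpha>^2 + 2 * (cmod c)^2 \<le> 2 / 3 * Q0"
      proof -
        have e1: "2 * \<alpha>^2 + 2 * (cmod c)^2 = 2/9 * X^2 + 49/648 * (cmod P)^2"
          unfolding cm \<alpha>_def by (simp add: power_mult_distrib power_divide)
        have e2: "2 / 3 * Q0 = 2/9 * X^2 + 84/648 * (cmod P)^2"
          unfolding Q0_def by (simp add: distrib_left)
        have "0 \<le> (cmod P)^2" by simp
        then show ?thesis unfolding e1 e2 by linarith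
      qed
      then have "real n * (2 * \<alpha>^2 + 2 * (cmod c)^2) \<le> real n * (2 / 3 * Q0)"
        by (intro mult_left_mono) auto
      then show ?thesis by simp
    qed
    finally have q: "Q0^2 \<le> (2 * real n / 3) * Q0" .
    show ?thesis
    proof (cases "Q0 > 0")
      case True
      then show ?thesis using q by (simp add: power2_eq_square)
    next
      case False
      then show ?thesis by simp
    qed
  qed
  have "(\<Sum>i<n. \<Sum>j<n. - max 0 (- Re (z i * cnj (z j)))) = - (\<Sum>i<n. \<Sum>j<n. max 0 (- Re (z i * cnj (z j))))"
    by (simp add: sum_negf)
  then show ?thesis using step1 step2 step3 by linarith
qed


lemma sum_single0:
  fixes f :: "nat \<Rightarrow> real"
  assumes "0 < n" "\<And>k. 0 < k \<Longrightarrow> k < n \<Longrightarrow> f k = 0"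
  shows "(\<Sum>k<n. f k) = f 0"
proof -
  have "(\<Sum>k<n. f k) = (\<Sum>k<n. if k = 0 then f 0 else 0)"
    using assms(2) by (intro sum.cong) auto
  also have "\<dots> = f 0" using assms(1) by simp
  finally show ?thesis .
qed

lemma sum_two01:
  fixes f :: "nat \<Rightarrow> real"
  assumes "1 < n" "\<And>k. 1 < k \<Longrightarrow> k < n \<Longrightarrow> f k = 0"
  shows "(\<Sum>k<n. f k) = f 0 + f 1"
proof -
  have "(\<Sum>k<n. f k) = (\<Sum>k<n. (if k = 0 then f 0 else 0) + (if k = 1 then f 1 else 0))"
    using assms(2) by (intro sum.cong) (auto simp: not_less)
  also have "\<dots> = f 0 + f 1" using assms(1) by (simp add: sum.distrib)
  finally show ?thesis .
qed

theorem theorem1p2: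
  fixes n :: nat and A :: "real mat" and \<mu> :: "nat \<Rightarrow> real"
  assumes "n \<ge> 2"
    and "A \<in> carrier_mat n n"
    and "transpose_mat A = A"
    and "\<forall>i<n. \<forall>j<n. i \<noteq> j \<longrightarrow> 0 \<le> A $$ (i, j) \<and> A $$ (i, j) \<le> 1"
    and "\<forall>i<n. 0 \<le> A $$ (i, i)"
    and "char_poly A = (\<Prod>i\<in>{1..n}. [:- \<mu> i, 1:])"
    and "\<forall>i j. 1 \<le> i \<and> i \<le> j \<and> j \<le> n \<longrightarrow> \<mu> j \<le> \<mu> i"
  shows "\<mu> (n - 1) + \<mu> n \<ge> - (2 * real n / 3) \<and> \<mu> (n - 1) \<ge> - (real n / 3)"
proof -
  note n2 = assms(1) and Ac = assms(2) and off = assms(4) and dg = assms(5)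
  define es where "es = map \<mu> (rev [1..<Suc n])"
  have cp: "char_poly A = (\<Prod>e\<leftarrow>es. [:- e, 1:])"
  proof -
    have "(\<Prod>i\<in>{1..n}. [:- \<mu> i, 1:]) = (\<Prod>i\<in>set (rev [1..<Suc n]). [:- \<mu> i, 1:])"
    proof -
      have "set (rev [1..<Suc n]) = {1..n}" by auto
      then show ?thesis by simp
    qed
    also have "\<dots> = prod_list (map (\<lambda>i. [:- \<mu> i, 1:]) (rev [1..<Suc n]))"
      by (rule prod.distinct_set_conv_list) simp
    also have "\<dots> = (\<Prod>e\<leftarrow>es. [:- e, 1:])" by (simp add: es_def o_def)
    finally show ?thesis using assms(6) by simp
  qed
  obtain B P Q where schur: "schur_decomposition A es = (B, P, Q)"
    by (cases "schur_decomposition A es") auto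
  from schur_decomposition[OF Ac cp schur]
  have sim: "similar_mat_wit A B P Q" and ut: "upper_triangular B" and dB: "diag_mat B = es"
    by auto
  from sim Ac have Bc: "B \<in> carrier_mat n n" and Pc: "P \<in> carrier_mat n n" and Qc: "Q \<in> carrier_mat n n"
    and PQ: "P * Q = 1\<^sub>m n" and QP: "Q * P = 1\<^sub>m n" and AePBQ: "A = P * B * Q"
    unfolding similar_mat_wit_def Let_def by auto
  have AP: "A * P = P * B"
  proof -
    have "A * P = P * B * Q * P" using AePBQ by simp
    also have "\<dots> = P * B * (Q * P)" using Pc Bc Qc by (simp add: assoc_mult_mat[of _ n n _ n _ n])
    also have "\<dots> = P * B" using QP Pc Bc by simp
    finally show ?thesis .
  qed
  have len: "length es = n" by (simp add: es_def)
  have B00: "B $$ (0,0) = \<mu> n"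
  proof -
    have "diag_mat B ! 0 = B $$ (0,0)" using Bc n2 by (simp add: diag_mat_def)
    moreover have "es ! 0 = \<mu> n" using n2 by (simp add: es_def rev_nth)
    ultimately show ?thesis using dB by simp
  qed
  have B11: "B $$ (1,1) = \<mu> (n - 1)"
  proof -
    have "diag_mat B ! 1 = B $$ (1,1)" using Bc n2 by (simp add: diag_mat_def)
    moreover have "es ! 1 = \<mu> (n - 1)"
    proof -
      have "Suc (n - Suc (Suc 0)) = n - Suc 0" using n2 by arith
      then show ?thesis using n2 by (simp add: es_def rev_nth)
    qed
    ultimately show ?thesis using dB by simp
  qed
  have Blow: "B $$ (i,j) = 0" if "j < i" "i < n" for i j
    using ut that Bc unfolding upper_triangular_def by auto
  define x where "x i = P $$ (i, 0)" for i
  define y0 where "y0 i = P $$ (i, 1)" for i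
  define b where "b = B $$ (0, 1)"
  have Ax: "(\<Sum>j<n. A $$ (i,j) * x j) = \<mu> n * x i" if i: "i < n" for i
  proof -
    have "(A * P) $$ (i,0) = (P * B) $$ (i,0)" using AP by simp
    moreover have "(A * P) $$ (i,0) = (\<Sum>j<n. A $$ (i,j) * x j)"
      using Ac Pc i n2 by (simp add: scalar_prod_def x_def atLeast0LessThan)
    moreover have "(P * B) $$ (i,0) = (\<Sum>k<n. P $$ (i,k) * B $$ (k,0))"
      using Bc Pc i n2 by (simp add: scalar_prod_def atLeast0LessThan)
    moreover have "(\<Sum>k<n. P $$ (i,k) * B $$ (k,0)) = P $$ (i,0) * B $$ (0,0)"
      using n2 by (intro sum_single0) (auto simp: Blow)
    ultimately show ?thesis by (simp add: B00 x_def mult.commute)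
  qed
  have Ay: "(\<Sum>j<n. A $$ (i,j) * y0 j) = b * x i + \<mu> (n - 1) * y0 i" if i: "i < n" for i
  proof -
    have "(A * P) $$ (i,1) = (P * B) $$ (i,1)" using AP by simp
    moreover have "(A * P) $$ (i,1) = (\<Sum>j<n. A $$ (i,j) * y0 j)"
      using Ac Pc i n2 by (simp add: scalar_prod_def y0_def atLeast0LessThan)
    moreover have "(P * B) $$ (i,1) = (\<Sum>k<n. P $$ (i,k) * B $$ (k,1))"
      using Bc Pc i n2 by (simp add: scalar_prod_def atLeast0LessThan)
    moreover have "(\<Sum>k<n. P $$ (i,k) * B $$ (k,1)) = P $$ (i,0) * B $$ (0,1) + P $$ (i,1) * B $$ (1,1)"
      using n2 by (intro sum_two01) (auto simp: Blow)
    ultimately show ?thesis using B11 by (simp add: x_def y0_def b_def mult.commute)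
  qed
  have QPe: "(\<Sum>k<n. Q $$ (i,k) * P $$ (k,j)) = (if i = j then 1 else 0)" if "i < n" "j < n" for i j
  proof -
    have "(Q * P) $$ (i,j) = (\<Sum>k<n. Q $$ (i,k) * P $$ (k,j))"
      using Qc Pc that by (simp add: scalar_prod_def atLeast0LessThan)
    then show ?thesis using QP that by simp
  qed
  define sx where "sx = (\<Sum>i<n. (x i)^2)"
  define \<kappa> where "\<kappa> = (\<Sum>i<n. x i * y0 i) / sx"
  define w where "w i = y0 i - \<kappa> * x i" for i
  define sw where "sw = (\<Sum>i<n. (w i)^2)"
  have sxpos: "sx > 0"
  proof (rule ccontr)
    assume "\<not> sx > 0"
    then have "sx = 0" using sum_nonneg[of "{..<n}" "\<lambda>i. (x i)^2"] by (simp add: sx_def)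
    then have x0: "x k = 0" if "k < n" for k
      using that sum_nonneg_eq_0_iff[of "{..<n}" "\<lambda>i. (x i)^2"] by (simp add: sx_def)
    have "(\<Sum>k<n. Q $$ (0,k) * P $$ (k,0)) = 0" using x0 by (simp add: x_def)
    then show False using QPe[of 0 0] n2 by simp
  qed
  have xw: "(\<Sum>i<n. x i * w i) = 0"
  proof -
    have "(\<Sum>i<n. x i * w i) = (\<Sum>i<n. x i * y0 i) - \<kappa> * sx"
      by (simp add: w_def sx_def right_diff_distrib sum_subtractf sum_distrib_left power2_eq_square mult_ac)
    then show ?thesis using sxpos by (simp add: \<kappa>_def)
  qed
  have swpos: "sw > 0"
  proof (rule ccontr)
    assume "\<not> sw > 0"
    then have "sw = 0" using sum_nonneg[of "{..<n}" "\<lambda>i. (w i)^2"] by (simp add: sw_def)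
    then have w0: "w k = 0" if "k < n" for k
      using that sum_nonneg_eq_0_iff[of "{..<n}" "\<lambda>i. (w i)^2"] by (simp add: sw_def)
    have "(\<Sum>k<n. Q $$ (1,k) * P $$ (k,1)) = (\<Sum>k<n. \<kappa> * (Q $$ (1,k) * P $$ (k,0)))"
      using w0 by (intro sum.cong) (auto simp: w_def y0_def x_def)
    also have "\<dots> = \<kappa> * (\<Sum>k<n. Q $$ (1,k) * P $$ (k,0))" by (simp add: sum_distrib_left)
    also have "\<dots> = 0" using QPe[of 1 0] n2 by simp
    finally show False using QPe[of 1 1] n2 by simp
  qed
  have Aw: "(\<Sum>j<n. A $$ (i,j) * w j) = \<mu> (n - 1) * w i + (b + \<kappa> * \<mu> (n - 1) - \<kappa> * \<mu> n) * x i"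
    if i: "i < n" for i
  proof -
    have "(\<Sum>j<n. A $$ (i,j) * w j) = (\<Sum>j<n. A $$ (i,j) * y0 j) - \<kappa> * (\<Sum>j<n. A $$ (i,j) * x j)"
      by (simp add: w_def right_diff_distrib sum_subtractf sum_distrib_left mult_ac)
    also have "\<dots> = b * x i + \<mu> (n - 1) * y0 i - \<kappa> * (\<mu> n * x i)" using Ax[OF i] Ay[OF i] by simp
    finally show ?thesis by (simp add: w_def algebra_simps)
  qed
  define qf where "qf v = (\<Sum>i<n. v i * (\<Sum>j<n. A $$ (i,j) * v j))" for v
  have qfx: "qf x = \<mu> n * sx"
    unfolding qf_def sx_def using Ax by (simp add: sum_distrib_left power2_eq_square mult_ac)
  have qfw: "qf w = \<mu> (n - 1) * sw"
  proof -
    have "qf w = (\<Sum>i<n. \<mu> (n - 1) * (w i)^2 + (b + \<kappa> * \<mu> (n - 1) - \<kappa> * \<mu> n) * (x i * w i))"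
      unfolding qf_def
    proof (intro sum.cong refl)
      fix i assume "i \<in> {..<n}"
      then have i: "i < n" by simp
      show "w i * (\<Sum>j<n. A $$ (i,j) * w j) = \<mu> (n - 1) * (w i)^2 + (b + \<kappa> * \<mu> (n - 1) - \<kappa> * \<mu> n) * (x i * w i)"
        unfolding Aw[OF i] by (simp add: algebra_simps power2_eq_square)
    qed
    also have "\<dots> = \<mu> (n - 1) * sw + (b + \<kappa> * \<mu> (n - 1) - \<kappa> * \<mu> n) * (\<Sum>i<n. x i * w i)"
      by (simp add: sum.distrib sum_distrib_left sw_def)
    finally show ?thesis using xw by simp
  qed
  have qf_scale: "qf (\<lambda>i. c * v i) = c^2 * qf v" for c v
    unfolding qf_def by (simp add: sum_distrib_left power2_eq_square mult_ac)
  define xh where "xh i = x i / sqrt sx" for i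
  define wh where "wh i = w i / sqrt sw" for i
  have xh2: "(\<Sum>i<n. (xh i)^2) = 1"
    using sxpos by (simp add: xh_def power_divide sx_def[symmetric] flip: sum_divide_distrib)
  have wh2: "(\<Sum>i<n. (wh i)^2) = 1"
    using swpos by (simp add: wh_def power_divide sw_def[symmetric] flip: sum_divide_distrib)
  have xwh: "(\<Sum>i<n. xh i * wh i) = 0"
    by (simp add: xh_def wh_def flip: sum_divide_distrib) (simp add: xw)
  have qxh: "qf xh = \<mu> n"
  proof -
    have "qf xh = (1 / sqrt sx)^2 * qf x"
    proof -
      have "xh = (\<lambda>i. 1 / sqrt sx * x i)" by (simp add: fun_eq_iff xh_def)
      then show ?thesis using qf_scale[of "1 / sqrt sx" x] by simp
    qed
    then show ?thesis using sxpos qfx by (simp add: power_divide)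
  qed
  have qwh: "qf wh = \<mu> (n - 1)"
  proof -
    have "qf wh = (1 / sqrt sw)^2 * qf w"
    proof -
      have "wh = (\<lambda>i. 1 / sqrt sw * w i)" by (simp add: fun_eq_iff wh_def)
      then show ?thesis using qf_scale[of "1 / sqrt sw" w] by simp
    qed
    then show ?thesis using swpos qfw by (simp add: power_divide)
  qed
  have main: "- (2 * real n / 3) \<le> (\<Sum>i<n. \<Sum>j<n. A $$ (i,j) * (xh i * xh j + wh i * wh j))"
    by (rule core[OF xh2 wh2 xwh]) (use off dg in auto)
  have "(\<Sum>i<n. \<Sum>j<n. A $$ (i,j) * (xh i * xh j + wh i * wh j)) = qf xh + qf wh"
    unfolding qf_def by (simp add: sum.distrib sum_distrib_left algebra_simps)
  then have s: "- (2 * real n / 3) \<le> \<mu> (n - 1) + \<mu> n" using main qxh qwh by simp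
  have "\<mu> n \<le> \<mu> (n - 1)" using assms(7) n2 by auto
  then show ?thesis using s by simp
qed

end
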